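(* Let $C\le A$ be groups and $2\le n\le\infty$. If $a\in A\setminus C$ is $n$-RF (respectively $n$-RTF) rel $C$, then so is every element $\tilde a\in CaC$.
   Context: For a group $G$, subgroup $D$, and $2\le n\le\infty$: $a\in G\setminus D$ is $n$-RF rel $D$ if $a^{e_1}d_1\cdots a^{e_k}d_k\ne\mathrm{id}$ for all $k\ge1$, $e_i\in\{\pm1\}$, $d_i\in D$ such that $d_i\ne\mathrm{id}$ whenever $e_i=-e_{i+1}$ (indices mod $k$), and fewer than $n$ of the $e_i$ are $+1$ and fewer than $n$ are $-1$. $a\in G\setminus D$ is $n$-RTF rel $D$ if $ad_1ad_2\cdots ad_k\ne\mathrm{id}$ for all $d_i\in D$ and $1\le k<n$. *)

theory Defs
  imports "HOL-Algebra.Group" "HOL-Library.Extended_Nat"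
begin

text \<open>A word a^{e_1} d_1 ... a^{e_k} d_k is encoded as a list of pairs (e_i, d_i),
  where e_i = True means exponent +1 and e_i = False means exponent -1.\<close>

definition word_eval :: "('a, 'b) monoid_scheme \<Rightarrow> 'a \<Rightarrow> (bool \<times> 'a) list \<Rightarrow> 'a" where
  "word_eval G a ws =
     foldr (\<lambda>(e, d) acc. (if e then a else inv\<^bsub>G\<^esub> a) \<otimes>\<^bsub>G\<^esub> d \<otimes>\<^bsub>G\<^esub> acc) ws \<one>\<^bsub>G\<^esub>"

definition n_RF :: "('a, 'b) monoid_scheme \<Rightarrow> 'a set \<Rightarrow> enat \<Rightarrow> 'a \<Rightarrow> bool" where
  "n_RF G D n a \<longleftrightarrow>
     a \<in> carrier G - D \<and>
     (\<forall>ws. ws \<noteq> [] \<and>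
           (\<forall>p \<in> set ws. snd p \<in> D) \<and>
           (\<forall>i < length ws. fst (ws ! i) \<noteq> fst (ws ! ((i + 1) mod length ws))
                              \<longrightarrow> snd (ws ! i) \<noteq> \<one>\<^bsub>G\<^esub>) \<and>
           enat (length (filter fst ws)) < n \<and>
           enat (length (filter (\<lambda>p. \<not> fst p) ws)) < n
        \<longrightarrow> word_eval G a ws \<noteq> \<one>\<^bsub>G\<^esub>)"

definition n_RTF :: "('a, 'b) monoid_scheme \<Rightarrow> 'a set \<Rightarrow> enat \<Rightarrow> 'a \<Rightarrow> bool" where
  "n_RTF G D n a \<longleftrightarrow>
     a \<in> carrier G - D \<and>
     (\<forall>ds. set ds \<subseteq> D \<and> 1 \<le> length ds \<and> enat (length ds) < n
        \<longrightarrow> foldr (\<lambda>d acc. a \<otimes>\<^bsub>G\<^esub> d \<otimes>\<^bsub>G\<^esub> acc) ds \<one>\<^bsub>G\<^esub> \<noteq> \<one>\<^bsub>G\<^esub>)"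

end

theory Submission
  imports Defs
begin

fun tr :: "('a, 'b) monoid_scheme \<Rightarrow> (bool \<Rightarrow> 'a) \<Rightarrow> (bool \<Rightarrow> 'a) \<Rightarrow> bool \<Rightarrow> (bool \<times> 'a) list \<Rightarrow> (bool \<times> 'a) list" where
  "tr G R L x [] = []"
| "tr G R L x (p # ws) = (fst p, R (fst p) \<otimes>\<^bsub>G\<^esub> snd p \<otimes>\<^bsub>G\<^esub> L (case ws of [] \<Rightarrow> x | q # _ \<Rightarrow> fst q)) # tr G R L x ws"

lemma tr_length[simp]: "length (tr G R L x ws) = length ws"
  by (induction ws) auto

lemma tr_fst[simp]: "map fst (tr G R L x ws) = map fst ws"
  by (induction ws) auto

lemma tr_nth: "i < length ws \<Longrightarrow> tr G R L x ws ! i =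
   (fst (ws ! i), R (fst (ws ! i)) \<otimes>\<^bsub>G\<^esub> snd (ws ! i) \<otimes>\<^bsub>G\<^esub> L (if Suc i < length ws then fst (ws ! Suc i) else x))"
proof (induction ws arbitrary: i)
  case Nil then show ?case by simp
next
  case (Cons p ws)
  show ?case
  proof (cases i)
    case 0 then show ?thesis by (cases ws) auto
  next
    case (Suc j) then show ?thesis using Cons by auto
  qed
qed

lemma tr_carrier:
  assumes "group G" "\<And>e. R e \<in> carrier G" "\<And>e. L e \<in> carrier G" "\<forall>p\<in>set ws. snd p \<in> carrier G"
  shows "\<forall>p\<in>set (tr G R L x ws). snd p \<in> carrier G"
  using assms(4)
proof (induction ws)
  case (Cons p ws)
  interpret group G by fact
  show ?case using Cons assms(2,3) by auto
qed simp

lemma filter_count: "map fst xs = map fst ys \<Longrightarrow> length (filter P (map fst xs)) = length (filter P (map fst ys))"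
  by simp

lemma word_eval_tr:
  fixes G (structure)
  assumes G: "group G" and a: "a \<in> carrier G" and c1: "c1 \<in> carrier G" and c2: "c2 \<in> carrier G"
    and ws: "\<forall>p\<in>set ws. snd p \<in> carrier G" and x: "True"
  shows "word_eval G (c1 \<otimes>\<^bsub>G\<^esub> a \<otimes>\<^bsub>G\<^esub> c2) ws \<otimes>\<^bsub>G\<^esub> (\<lambda>e. if e then c1 else inv\<^bsub>G\<^esub> c2) x
    = (\<lambda>e. if e then c1 else inv\<^bsub>G\<^esub> c2) (case ws of [] \<Rightarrow> x | q # _ \<Rightarrow> fst q) \<otimes>\<^bsub>G\<^esub>
      word_eval G a (tr G (\<lambda>e. if e then c2 else inv\<^bsub>G\<^esub> c1) (\<lambda>e. if e then c1 else inv\<^bsub>G\<^esub> c2) x ws)"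
  using ws
proof (induction ws)
  interpret group G by fact
  case Nil
  show ?case using c1 c2 by (simp add: word_eval_def)
next
  interpret group G by fact
  case (Cons p ws)
  obtain e d where p: "p = (e, d)" by fastforce
  have d: "d \<in> carrier G" using Cons.prems p by auto
  have wsc: "\<forall>p\<in>set ws. snd p \<in> carrier G" using Cons.prems by auto
  note IH = Cons.IH[OF wsc]
  define L where "L = (\<lambda>e. if e then c1 else inv\<^bsub>G\<^esub> c2)"
  define R where "R = (\<lambda>e. if e then c2 else inv\<^bsub>G\<^esub> c1)"
  define W where "W = word_eval G (c1 \<otimes> a \<otimes> c2) ws"
  define V where "V = word_eval G a (tr G R L x ws)"
  define y where "y = (case ws of [] \<Rightarrow> x | q # _ \<Rightarrow> fst q)"
  have Lc: "L e \<in> carrier G" for e using c1 c2 by (simp add: L_def)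
  have Rc: "R e \<in> carrier G" for e using c1 c2 by (simp add: R_def)
  define ea where "ea = (if e then a else inv a)"
  have ae: "ea \<in> carrier G" using a by (simp add: ea_def)
  have bsplit: "(if e then c1 \<otimes> a \<otimes> c2 else inv (c1 \<otimes> a \<otimes> c2)) = L e \<otimes> (if e then a else inv a) \<otimes> R e"
    using a c1 c2 by (simp add: L_def R_def inv_mult_group m_assoc)
  have wc: "word_eval G g zs \<in> carrier G" if "g \<in> carrier G" "\<forall>p\<in>set zs. snd p \<in> carrier G" for g zs
    using that(2) unfolding word_eval_def by (induction zs) (auto simp: that(1))
  have Wc: "W \<in> carrier G" unfolding W_def using wc wsc a c1 c2 by simp
  have Vc: "V \<in> carrier G" unfolding V_def
    using wc[OF a tr_carrier[OF G Rc Lc wsc]] .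
  have IH': "W \<otimes> L x = L y \<otimes> V" using IH unfolding W_def V_def L_def R_def y_def by simp
  have "word_eval G (c1 \<otimes> a \<otimes> c2) (p # ws) \<otimes> L x
      = (L e \<otimes> ea \<otimes> R e) \<otimes> d \<otimes> W \<otimes> L x"
    using bsplit by (simp add: p word_eval_def W_def ea_def)
  also have "\<dots> = L e \<otimes> ea \<otimes> R e \<otimes> d \<otimes> (W \<otimes> L x)"
    using Lc Rc ae d Wc by (simp add: m_assoc)
  also have "\<dots> = L e \<otimes> (ea \<otimes> (R e \<otimes> d \<otimes> L y) \<otimes> V)"
    unfolding IH' using Lc Rc ae d Wc Vc by (simp add: m_assoc)
  also have "\<dots> = L e \<otimes> word_eval G a (tr G R L x (p # ws))"
    by (simp add: p word_eval_def V_def y_def ea_def)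
  finally show ?case unfolding L_def R_def p by simp
qed

lemma foldr_tr:
  fixes G (structure)
  assumes G: "group G" and a: "a \<in> carrier G" and c1: "c1 \<in> carrier G" and c2: "c2 \<in> carrier G"
    and ds: "set ds \<subseteq> carrier G"
  shows "foldr (\<lambda>d acc. (c1 \<otimes> a \<otimes> c2) \<otimes> d \<otimes> acc) ds \<one> \<otimes> c1
     = c1 \<otimes> foldr (\<lambda>d acc. a \<otimes> d \<otimes> acc) (map (\<lambda>d. c2 \<otimes> d \<otimes> c1) ds) \<one>"
  using ds
proof (induction ds)
  interpret group G by fact
  case Nil then show ?case using c1 by simp
next
  interpret group G by fact
  case (Cons d ds)
  have fc: "foldr (\<lambda>d acc. g \<otimes> d \<otimes> acc) zs \<one> \<in> carrier G" if "g \<in> carrier G" "set zs \<subseteq> carrier G" for g zs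
    using that(2) by (induction zs) (auto simp: that(1))
  define W where "W = foldr (\<lambda>d acc. (c1 \<otimes> a \<otimes> c2) \<otimes> d \<otimes> acc) ds \<one>"
  define V where "V = foldr (\<lambda>d acc. a \<otimes> d \<otimes> acc) (map (\<lambda>d. c2 \<otimes> d \<otimes> c1) ds) \<one>"
  have dc: "d \<in> carrier G" "set ds \<subseteq> carrier G" using Cons.prems by auto
  have Wc: "W \<in> carrier G" unfolding W_def using fc dc a c1 c2 by simp
  have Vc: "V \<in> carrier G" unfolding V_def using fc[of a "map (\<lambda>d. c2 \<otimes> d \<otimes> c1) ds"] dc a c1 c2 by auto
  have IH: "W \<otimes> c1 = c1 \<otimes> V" using Cons.IH dc unfolding W_def V_def by simp
  have "foldr (\<lambda>d acc. (c1 \<otimes> a \<otimes> c2) \<otimes> d \<otimes> acc) (d # ds) \<one> \<otimes> c1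
      = c1 \<otimes> a \<otimes> c2 \<otimes> d \<otimes> (W \<otimes> c1)"
    using Wc dc a c1 c2 by (simp add: W_def m_assoc)
  also have "\<dots> = c1 \<otimes> (a \<otimes> (c2 \<otimes> d \<otimes> c1) \<otimes> V)"
    unfolding IH using Vc dc a c1 c2 by (simp add: m_assoc)
  finally show ?case by (simp add: V_def)
qed

lemma conj_one:
  fixes G (structure)
  assumes "group G" "c \<in> carrier G" "d \<in> carrier G" "c \<otimes> d \<otimes> inv c = \<one>"
  shows "d = \<one>"
proof -
  interpret group G by fact
  have "c \<otimes> d = c" using assms
    by (metis inv_closed m_closed r_one l_inv m_assoc)
  then show ?thesis using assms
    by (metis l_cancel_one)
qed

theorem lemma5p23:
  fixes A (structure) and C :: "'a set" and n :: enat and a c1 c2 :: 'a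
  assumes "group A" and "subgroup C A" and "2 \<le> n"
    and "c1 \<in> C" and "c2 \<in> C"
  shows "(n_RF A C n a \<longrightarrow> n_RF A C n (c1 \<otimes> a \<otimes> c2))
       \<and> (n_RTF A C n a \<longrightarrow> n_RTF A C n (c1 \<otimes> a \<otimes> c2))"
proof -
  interpret group A by fact
  interpret C: subgroup C A by fact
  have c1: "c1 \<in> carrier A" and c2: "c2 \<in> carrier A" using assms(4,5) by auto
  have bnot: "c1 \<otimes> a \<otimes> c2 \<in> carrier A - C" if a: "a \<in> carrier A - C"
  proof -
    have "c1 \<otimes> a \<otimes> c2 \<notin> C"
    proof
      assume "c1 \<otimes> a \<otimes> c2 \<in> C"
      then have "inv c1 \<otimes> (c1 \<otimes> a \<otimes> c2) \<otimes> inv c2 \<in> C"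
        using assms(4,5) by (simp add: C.m_closed C.m_inv_closed)
      also have "inv c1 \<otimes> (c1 \<otimes> a \<otimes> c2) \<otimes> inv c2 = a"
        using a c1 c2 by (simp add: m_assoc[symmetric] ) (simp add: m_assoc)
      finally show False using a by simp
    qed
    then show ?thesis using a c1 c2 by simp
  qed
  define L where "L = (\<lambda>e. if e then c1 else inv c2)"
  define R where "R = (\<lambda>e. if e then c2 else inv c1)"
  have LC: "L e \<in> C" for e using assms(4,5) by (simp add: L_def C.m_inv_closed)
  have RC: "R e \<in> C" for e using assms(4,5) by (simp add: R_def C.m_inv_closed)
  have Lc: "L e \<in> carrier A" for e using LC by auto
  have Rc: "R e \<in> carrier A" for e using RC by auto
  have RL: "d = \<one>" if "R e \<otimes> d \<otimes> L (\<not> e) = \<one>" "d \<in> carrier A" for e d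
  proof (cases e)
    case True
    then show ?thesis using conj_one[OF assms(1) c2 that(2)] that(1) by (simp add: R_def L_def)
  next
    case False
    then show ?thesis using conj_one[OF assms(1) inv_closed[OF c1] that(2)] that(1) c1
      by (simp add: R_def L_def)
  qed
  have part1: "n_RF A C n (c1 \<otimes> a \<otimes> c2)" if H: "n_RF A C n a"
  proof -
    have a: "a \<in> carrier A - C" using H by (simp add: n_RF_def)
    show ?thesis unfolding n_RF_def
    proof (intro conjI allI impI)
      show "c1 \<otimes> a \<otimes> c2 \<in> carrier A - C" using bnot a .
    next
      fix ws :: "(bool \<times> 'a) list"
      assume P: "ws \<noteq> [] \<and> (\<forall>p\<in>set ws. snd p \<in> C) \<and>
         (\<forall>i<length ws. fst (ws ! i) \<noteq> fst (ws ! ((i + 1) mod length ws)) \<longrightarrow> snd (ws ! i) \<noteq> \<one>) \<and>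
         enat (length (filter fst ws)) < n \<and> enat (length (filter (\<lambda>p. \<not> fst p) ws)) < n"
      define x where "x = fst (ws ! 0)"
      define ws' where "ws' = tr A R L x ws"
      have wsc: "\<forall>p\<in>set ws. snd p \<in> carrier A" using P by auto
      have hd: "(case ws of [] \<Rightarrow> x | q # _ \<Rightarrow> fst q) = x" using P by (cases ws) (auto simp: x_def)
      have eq: "word_eval A (c1 \<otimes> a \<otimes> c2) ws \<otimes> L x = L x \<otimes> word_eval A a ws'"
        using word_eval_tr[OF assms(1) _ c1 c2 wsc, of a x] a hd
        unfolding ws'_def L_def R_def by simp
      have fst': "map fst ws' = map fst ws" unfolding ws'_def by simp
      have nth': "ws' ! i = (fst (ws ! i), R (fst (ws ! i)) \<otimes> snd (ws ! i) \<otimes> L (fst (ws ! ((i + 1) mod length ws))))"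
        if "i < length ws" for i
      proof -
        have "(if Suc i < length ws then fst (ws ! Suc i) else x) = fst (ws ! ((i + 1) mod length ws))"
        proof (cases "Suc i < length ws")
          case False
          then have "Suc i = length ws" using that by simp
          then show ?thesis using False by (simp add: x_def)
        qed simp
        then show ?thesis unfolding ws'_def using tr_nth[OF that, of A R L x] by simp
      qed
      have cnt1: "length (filter fst ws') = length (filter fst ws)"
      proof -
        have "length (filter fst zs) = length (filter (\<lambda>b. b) (map fst zs))" for zs :: "(bool \<times> 'a) list"
          by (induction zs) auto
        then show ?thesis using fst' by metis
      qed
      have cnt2: "length (filter (\<lambda>p. \<not> fst p) ws') = length (filter (\<lambda>p. \<not> fst p) ws)"
      proof -
        have "length (filter (\<lambda>p. \<not> fst p) zs) = length (filter (\<lambda>b. \<not> b) (map fst zs))" for zs :: "(bool \<times> 'a) list"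
          by (induction zs) auto
        then show ?thesis using fst' by metis
      qed
      have len: "length ws' = length ws" unfolding ws'_def by simp
      have Q: "ws' \<noteq> [] \<and> (\<forall>p\<in>set ws'. snd p \<in> C) \<and>
         (\<forall>i<length ws'. fst (ws' ! i) \<noteq> fst (ws' ! ((i + 1) mod length ws')) \<longrightarrow> snd (ws' ! i) \<noteq> \<one>) \<and>
         enat (length (filter fst ws')) < n \<and> enat (length (filter (\<lambda>p. \<not> fst p) ws')) < n"
      proof (intro conjI)
        show "ws' \<noteq> []" using P len by auto
        show "\<forall>p\<in>set ws'. snd p \<in> C"
        proof
          fix p assume "p \<in> set ws'"
          then obtain i where i: "i < length ws" "p = ws' ! i" using len by (auto simp: in_set_conv_nth)
          have "snd (ws ! i) \<in> C" using P i(1) nth_mem by blast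
          then show "snd p \<in> C" using i nth'[OF i(1)] LC RC by (simp add: C.m_closed)
        qed
        show "\<forall>i<length ws'. fst (ws' ! i) \<noteq> fst (ws' ! ((i + 1) mod length ws')) \<longrightarrow> snd (ws' ! i) \<noteq> \<one>"
        proof (intro allI impI)
          fix i assume i: "i < length ws'" and ne: "fst (ws' ! i) \<noteq> fst (ws' ! ((i + 1) mod length ws'))"
          have i': "i < length ws" using i len by simp
          have m: "(i + 1) mod length ws < length ws" using i' by (metis mod_less_divisor gr_implies_not0 neq0_conv)
          have ne': "fst (ws ! i) \<noteq> fst (ws ! ((i + 1) mod length ws))"
            using ne nth'[OF i'] nth'[OF m] len by simp
          have dne: "snd (ws ! i) \<noteq> \<one>" using P i' ne' by blast
          have dc: "snd (ws ! i) \<in> carrier A" using wsc i' by auto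
          have "fst (ws ! ((i + 1) mod length ws)) = (\<not> fst (ws ! i))" using ne' by auto
          then show "snd (ws' ! i) \<noteq> \<one>" using nth'[OF i'] RL[OF _ dc] dne by auto
        qed
        show "enat (length (filter fst ws')) < n" using P cnt1 by simp
        show "enat (length (filter (\<lambda>p. \<not> fst p) ws')) < n" using P cnt2 by simp
      qed
      have "word_eval A a ws' \<noteq> \<one>" using H Q unfolding n_RF_def by blast
      moreover have wc: "word_eval A a ws' \<in> carrier A"
      proof -
        have "\<forall>p\<in>set ws'. snd p \<in> carrier A" unfolding ws'_def using tr_carrier[OF assms(1) Rc Lc wsc] .
        then show ?thesis unfolding word_eval_def using a by (induction ws') auto
      qed
      ultimately show "word_eval A (c1 \<otimes> a \<otimes> c2) ws \<noteq> \<one>"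
        using eq Lc[of x] by (metis l_one l_cancel_one')
    qed
  qed
  have part2: "n_RTF A C n (c1 \<otimes> a \<otimes> c2)" if H: "n_RTF A C n a"
  proof -
    have a: "a \<in> carrier A - C" using H by (simp add: n_RTF_def)
    show ?thesis unfolding n_RTF_def
    proof (intro conjI allI impI)
      show "c1 \<otimes> a \<otimes> c2 \<in> carrier A - C" using bnot a .
    next
      fix ds :: "'a list"
      assume P: "set ds \<subseteq> C \<and> 1 \<le> length ds \<and> enat (length ds) < n"
      define ds' where "ds' = map (\<lambda>d. c2 \<otimes> d \<otimes> c1) ds"
      have dsc: "set ds \<subseteq> carrier A" using P C.subset by blast
      have eq: "foldr (\<lambda>d acc. (c1 \<otimes> a \<otimes> c2) \<otimes> d \<otimes> acc) ds \<one> \<otimes> c1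
         = c1 \<otimes> foldr (\<lambda>d acc. a \<otimes> d \<otimes> acc) ds' \<one>"
        unfolding ds'_def using foldr_tr[OF assms(1) _ c1 c2 dsc, of a] a by simp
      have "set ds' \<subseteq> C" using P assms(4,5) unfolding ds'_def by (auto simp: C.m_closed)
      then have "foldr (\<lambda>d acc. a \<otimes> d \<otimes> acc) ds' \<one> \<noteq> \<one>"
        using H P unfolding n_RTF_def ds'_def by auto
      moreover have "foldr (\<lambda>d acc. a \<otimes> d \<otimes> acc) ds' \<one> \<in> carrier A"
      proof -
        have "set ds' \<subseteq> carrier A" using \<open>set ds' \<subseteq> C\<close> C.subset by blast
        then show ?thesis using a by (induction ds') auto
      qed
      ultimately show "foldr (\<lambda>d acc. (c1 \<otimes> a \<otimes> c2) \<otimes> d \<otimes> acc) ds \<one> \<noteq> \<one>"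
        using eq c1 by (metis l_one l_cancel_one')
    qed
  qed
  show ?thesis using part1 part2 by blast
qed

end
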